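(* Let $n\geq 2$ and $k\in\{0,1,\ldots,n\}$ be integers. For $x\in[0,1]$ let $c(x)=-\min\{x,1-x\}/(n-1)$ and $$p_{n,k}(x)=\binom{n}{k}\frac{x^{(k,c(x))}\,(1-x)^{(n-k,c(x))}}{1^{(n,c(x))}}.$$ Then $p_{n,k}$ is increasing on $[0,x^*_{n,k}]$ and decreasing on $[x^*_{n,k},1]$, where $$x^*_{n,k}=\begin{cases} x_{n,k}, & \text{if } k\leq \frac{n-1}{2},\\ \frac12, & \text{if } \frac{n-1}{2}<k<\frac{n+1}{2},\\ 1-x_{n,n-k}, & \text{if } k\geq\frac{n+1}{2},\end{cases}$$ and the numbers $x_{n,j}\in\left[\frac{j-1}{n-1},\frac{j}{n-1}\right]$, $j\in\{0,\ldots,n-1\}$, are as defined in the context.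
   Context: For real $y$ and $h$, the rising factorial with increment $h$ is $y^{(0,h)}=1$ and $y^{(m,h)}=y(y+h)\cdots(y+(m-1)h)$ for integers $m\geq1$. The quantity $p_{n,k}(x)$ is the probability that $k$ white balls are drawn in $n$ draws from a Pólya urn initially containing $x$ white and $1-x$ black "balls", where after each draw the drawn ball is returned together with $c(x)$ balls of the same colour. For integers $n\geq 2$ and $j\in\{0,\ldots,n-1\}$, let $$\varphi_{n,j}(x)=\sum_{i=0}^{n-1}\frac{1}{1-\frac{i}{n-1}x}-\sum_{i=0}^{n-j-1}\frac{1}{1-x-\frac{i}{n-1}x},\qquad x\in\left[0,\tfrac{n-1}{2n-j-2}\right),$$ and let $x_{n,j}$ be the (unique) number in $\left[\frac{j-1}{n-1},\frac{j}{n-1}\right]$ such that $\varphi_{n,j}$ is positive on $[0,x_{n,j})$ and negative on $\left(x_{n,j},\frac{n-1}{2n-j-2}\right)$; such a number exists. *)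

theory Defs
  imports Complex_Main
begin

definition rising_fact :: "real \<Rightarrow> nat \<Rightarrow> real \<Rightarrow> real" where
  "rising_fact y m h = (\<Prod>i<m. y + real i * h)"

definition polya_c :: "nat \<Rightarrow> real \<Rightarrow> real" where
  "polya_c n x = - min x (1 - x) / (real n - 1)"

definition polya_p :: "nat \<Rightarrow> nat \<Rightarrow> real \<Rightarrow> real" where
  "polya_p n k x = real (n choose k) *
     (rising_fact x k (polya_c n x) * rising_fact (1 - x) (n - k) (polya_c n x))
     / rising_fact 1 n (polya_c n x)"

definition phi :: "nat \<Rightarrow> nat \<Rightarrow> real \<Rightarrow> real" where
  "phi n j x = (\<Sum>i=0..n-1. 1 / (1 - real i / (real n - 1) * x))
             - (\<Sum>i=0..n-j-1. 1 / (1 - x - real i / (real n - 1) * x))"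

text \<open>Right end of the domain of phi n j.\<close>
definition phi_bound :: "nat \<Rightarrow> nat \<Rightarrow> real" where
  "phi_bound n j = (real n - 1) / (2 * real n - real j - 2)"

definition x_nj :: "nat \<Rightarrow> nat \<Rightarrow> real" where
  "x_nj n j = (THE x. (real j - 1) / (real n - 1) \<le> x \<and> x \<le> real j / (real n - 1) \<and>
      (\<forall>y. 0 \<le> y \<and> y < x \<longrightarrow> phi n j y > 0) \<and>
      (\<forall>y. x < y \<and> y < phi_bound n j \<longrightarrow> phi n j y < 0))"

definition x_star :: "nat \<Rightarrow> nat \<Rightarrow> real" where
  "x_star n k = (if real k \<le> (real n - 1) / 2 then x_nj n k
                 else if real k < (real n + 1) / 2 then 1 / 2
                 else 1 - x_nj n (n - k))"

end

theory Submission
  imports Defs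
begin


definition ff :: "nat \<Rightarrow> real \<Rightarrow> nat \<Rightarrow> real" where
  "ff n x t = 1 / (1 - real t / (real n - 1) * x)"

lemma phi_ff:
  assumes "n \<ge> 2"
  shows "phi n j x = (\<Sum>t\<in>{0..n-1}. ff n x t) - (\<Sum>i\<in>{0..n-j-1}. ff n x (n-1+i))"
proof -
  have N: "real n - 1 \<noteq> 0" using assms by simp
  have eq: "1 - x - real i / (real n - 1) * x = 1 - real (n-1+i) / (real n - 1) * x" for i
    using assms N by (simp add: of_nat_diff field_simps)
  show ?thesis unfolding phi_def ff_def by (simp only: eq)
qed

lemma ln_step:
  fixes a b :: real
  assumes "0 < b" "b < a"
  shows "(a - b) / a \<le> ln a - ln b" "ln a - ln b \<le> (a - b) / b"
proof -
  have "ln (b / a) \<le> b / a - 1" using assms by (intro ln_le_minus_one) auto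
  then show "(a - b) / a \<le> ln a - ln b" using assms by (simp add: ln_div field_simps)
  have "ln (a / b) \<le> a / b - 1" using assms by (intro ln_le_minus_one) auto
  then show "ln a - ln b \<le> (a - b) / b" using assms by (simp add: ln_div field_simps)
qed

lemma phi_at_j:
  assumes n: "n \<ge> 2" and j1: "1 \<le> j" and jn: "j + 1 < n"
  shows "phi n j (real j / (real n - 1)) \<le> 0"
proof -
  define N where "N = real n - 1"
  define a where "a r = N^2 - real j * r" for r :: real
  have N1: "N \<ge> 1" using n by (simp add: N_def)
  have jN: "real j < N" using jn by (simp add: N_def)
  have j0: "real j > 0" using j1 by simp
  have apos: "a r > 0" if "r \<le> 2*N - real j" for r
  proof -
    have "real j * r \<le> real j * (2*N - real j)" using that j0 by (intro mult_left_mono) auto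
    moreover have "(N - real j)^2 > 0" using jN by simp
    ultimately show ?thesis unfolding a_def by (simp add: power2_eq_square algebra_simps)
  qed
  have ffa: "ff n (real j / (real n - 1)) t = N^2 / a (real t)" if "real t \<le> 2*N - real j" for t
  proof -
    have "a (real t) > 0" using apos that by simp
    then show ?thesis using N1 unfolding ff_def a_def N_def[symmetric]
      by (simp add: field_simps power2_eq_square)
  qed
  define m1 where "m1 = n - 1"
  define r where "r = n - j - 1"
  have m1N: "real m1 = N" using n by (simp add: m1_def N_def of_nat_diff)
  have rN: "real r = N - real j" using jn by (simp add: r_def N_def of_nat_diff)
  have A: "(\<Sum>t\<in>{0..n-1}. ff n (real j / (real n - 1)) t)
      = N^2 * ((\<Sum>t<m1. 1 / a (real t)) + 1 / a N)"
  proof -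
    have "(\<Sum>t\<in>{0..n-1}. ff n (real j / (real n - 1)) t) = (\<Sum>t<Suc m1. ff n (real j / (real n - 1)) t)"
      unfolding m1_def by (simp add: atLeast0AtMost lessThan_Suc_atMost)
    also have "\<dots> = (\<Sum>t<m1. ff n (real j / (real n - 1)) t) + ff n (real j / (real n - 1)) m1"
      by simp
    also have "\<dots> = (\<Sum>t<m1. N^2 / a (real t)) + N^2 / a N"
    proof -
      have "(\<Sum>t<m1. ff n (real j / (real n - 1)) t) = (\<Sum>t<m1. N^2 / a (real t))"
        by (intro sum.cong refl ffa) (use m1N jN in auto)
      moreover have "ff n (real j / (real n - 1)) m1 = N^2 / a N"
        using ffa[of m1] m1N jN by simp
      ultimately show ?thesis by simp
    qed
    finally show ?thesis by (simp add: sum_distrib_left distrib_left)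
  qed
  have B: "(\<Sum>i\<in>{0..n-j-1}. ff n (real j / (real n - 1)) (n-1+i))
      = N^2 * (1 / a N + (\<Sum>i<r. 1 / a (N + 1 + real i)))"
  proof -
    have "(\<Sum>i\<in>{0..n-j-1}. ff n (real j / (real n - 1)) (n-1+i)) = (\<Sum>i\<le>r. ff n (real j / (real n - 1)) (m1+i))"
      unfolding m1_def r_def by (simp add: atLeast0AtMost)
    also have "\<dots> = ff n (real j / (real n - 1)) m1 + (\<Sum>i<r. ff n (real j / (real n - 1)) (m1 + Suc i))"
      by (simp add: sum.atMost_shift)
    also have "\<dots> = N^2 / a N + (\<Sum>i<r. N^2 / a (N + 1 + real i))"
    proof -
      have "(\<Sum>i<r. ff n (real j / (real n - 1)) (m1 + Suc i)) = (\<Sum>i<r. N^2 / a (N + 1 + real i))"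
      proof (intro sum.cong refl)
        fix i assume "i \<in> {..<r}"
        then have "real i + 1 \<le> real r" by simp
        then show "ff n (real j / (real n - 1)) (m1 + Suc i) = N^2 / a (N + 1 + real i)"
          using ffa[of "m1 + Suc i"] m1N rN by (simp add: algebra_simps)
      qed
      moreover have "ff n (real j / (real n - 1)) m1 = N^2 / a N"
        using ffa[of m1] m1N jN by simp
      ultimately show ?thesis by simp
    qed
    finally show ?thesis by (simp add: sum_distrib_left distrib_left)
  qed
  have SA: "real j * (\<Sum>t<m1. 1 / a (real t)) \<le> ln (a 0) - ln (a N)"
  proof -
    have "real j * (\<Sum>t<m1. 1 / a (real t)) = (\<Sum>t<m1. (a (real t) - a (real (Suc t))) / a (real t))"
      by (simp add: sum_distrib_left a_def algebra_simps)
    also have "\<dots> \<le> (\<Sum>t<m1. ln (a (real t)) - ln (a (real (Suc t))))"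
    proof (intro sum_mono ln_step(1))
      fix t assume "t \<in> {..<m1}"
      then have "t + 1 \<le> m1" by simp
      then have "real t + 1 \<le> N" using m1N by linarith
      then show "0 < a (real (Suc t))" using apos jN by simp
      show "a (real (Suc t)) < a (real t)" using j0 by (simp add: a_def)
    qed
    also have "\<dots> = ln (a 0) - ln (a N)"
      by (subst sum_lessThan_telescope') (simp add: m1N)
    finally show ?thesis .
  qed
  have SB: "ln (a N) - ln (a (2*N - real j)) \<le> real j * (\<Sum>i<r. 1 / a (N + 1 + real i))"
  proof -
    have "ln (a N) - ln (a (2*N - real j)) = (\<Sum>i<r. ln (a (N + real i)) - ln (a (N + real (Suc i))))"
      by (subst sum_lessThan_telescope') (simp add: rN)
    also have "\<dots> \<le> (\<Sum>i<r. (a (N + real i) - a (N + real (Suc i))) / a (N + real (Suc i)))"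
    proof (intro sum_mono ln_step(2))
      fix i assume "i \<in> {..<r}"
      then have "real i + 1 \<le> real r" by simp
      then show "0 < a (N + real (Suc i))" using apos rN by simp
      show "a (N + real (Suc i)) < a (N + real i)" using j0 by (simp add: a_def)
    qed
    also have "\<dots> = real j * (\<Sum>i<r. 1 / a (N + 1 + real i))"
      by (simp add: sum_distrib_left a_def algebra_simps)
    finally show ?thesis .
  qed
  have key: "ln (a 0) - ln (a N) = ln (a N) - ln (a (2*N - real j))"
  proof -
    have e0: "a 0 = N * N" and eN: "a N = N * (N - real j)" and e2: "a (2*N - real j) = (N - real j) * (N - real j)"
      by (simp_all add: a_def power2_eq_square algebra_simps)
    have "N > 0" "N - real j > 0" using N1 jN by auto
    then show ?thesis unfolding e0 eN e2 by (simp add: ln_mult)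
  qed
  have "(\<Sum>t<m1. 1 / a (real t)) \<le> (\<Sum>i<r. 1 / a (N + 1 + real i))"
    using SA SB key j0 by (smt (verit) mult_le_cancel_left_pos)
  then have "(\<Sum>t<m1. 1 / a (real t)) + 1 / a N \<le> 1 / a N + (\<Sum>i<r. 1 / a (N + 1 + real i))"
    by simp
  then have "N^2 * ((\<Sum>t<m1. 1 / a (real t)) + 1 / a N) \<le> N^2 * (1 / a N + (\<Sum>i<r. 1 / a (N + 1 + real i)))"
    by (intro mult_left_mono) auto
  then show ?thesis unfolding phi_ff[OF n] A B by simp
qed

lemma phi_at_jm1:
  assumes n: "n \<ge> 2" and j2: "2 \<le> j" and jn: "j + 1 < n"
  shows "phi n j ((real j - 1) / (real n - 1)) \<ge> 0"
proof -
  define N where "N = real n - 1"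
  define m where "m = real j - 1"
  define a where "a r = N^2 - m * r" for r :: real
  have N1: "N \<ge> 1" using n by (simp add: N_def)
  have mN: "m < N" using jn by (simp add: N_def m_def)
  have m0: "m \<ge> 1" using j2 by (simp add: m_def)
  have apos: "a r > 0" if "r \<le> 2*N - m" for r
  proof -
    have "m * r \<le> m * (2*N - m)" using that m0 by (intro mult_left_mono) auto
    moreover have "(N - m)^2 > 0" using mN by simp
    ultimately show ?thesis unfolding a_def by (simp add: power2_eq_square algebra_simps)
  qed
  have ffa: "ff n ((real j - 1) / (real n - 1)) t = N^2 / a (real t)" if "real t \<le> 2*N - m" for t
  proof -
    have "a (real t) > 0" using apos that by simp
    then show ?thesis using N1 unfolding ff_def a_def N_def[symmetric] m_def[symmetric]
      by (simp add: field_simps power2_eq_square)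
  qed
  have nN: "real n = N + 1" by (simp add: N_def)
  have njN: "real (n - j) = N - m" using jn by (simp add: N_def m_def of_nat_diff)
  have A: "(\<Sum>t\<in>{0..n-1}. ff n ((real j - 1) / (real n - 1)) t) = N^2 * (\<Sum>t<n. 1 / a (real t))"
  proof -
    have "{0..n-1} = {..<n}" using n by auto
    then have "(\<Sum>t\<in>{0..n-1}. ff n ((real j - 1) / (real n - 1)) t) = (\<Sum>t<n. N^2 / a (real t))"
    proof (simp, intro sum.cong refl ffa)
      fix t assume "t \<in> {..<n}"
      then have "real t + 1 \<le> real n" by simp
      then show "real t \<le> 2*N - m" using nN mN by linarith
    qed
    then show ?thesis by (simp add: sum_distrib_left)
  qed
  have B: "(\<Sum>i\<in>{0..n-j-1}. ff n ((real j - 1) / (real n - 1)) (n-1+i)) = N^2 * (\<Sum>i<n-j. 1 / a (N + real i))"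
  proof -
    have se: "{0..n-j-1} = {..<n-j}" using jn by auto
    have "(\<Sum>i\<in>{0..n-j-1}. ff n ((real j - 1) / (real n - 1)) (n-1+i)) = (\<Sum>i<n-j. ff n ((real j - 1) / (real n - 1)) (n-1+i))"
      by (simp only: se)
    also have "\<dots> = (\<Sum>i<n-j. N^2 / a (N + real i))"
    proof (rule sum.cong[OF refl])
      fix i assume "i \<in> {..<n-j}"
      then have "i + 1 \<le> n - j" by simp
      then have "real i + 1 \<le> real (n-j)" by (metis of_nat_1 of_nat_add of_nat_le_iff)
      then have "real (n - 1 + i) \<le> 2*N - m" "real (n - 1 + i) = N + real i"
        using njN n by (simp_all add: N_def of_nat_diff)
      then show "ff n ((real j - 1) / (real n - 1)) (n - 1 + i) = N^2 / a (N + real i)"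
        using ffa by simp
    qed
    finally show ?thesis by (simp add: sum_distrib_left)
  qed
  have SA: "ln (a (-1)) - ln (a N) \<le> m * (\<Sum>t<n. 1 / a (real t))"
  proof -
    have "ln (a (-1)) - ln (a N) = (\<Sum>t<n. ln (a (real t - 1)) - ln (a (real (Suc t) - 1)))"
      by (subst sum_lessThan_telescope') (simp add: nN)
    also have "\<dots> \<le> (\<Sum>t<n. (a (real t - 1) - a (real (Suc t) - 1)) / a (real (Suc t) - 1))"
    proof (intro sum_mono ln_step(2))
      fix t assume "t \<in> {..<n}"
      then have "real t + 1 \<le> real n" by simp
      then show "0 < a (real (Suc t) - 1)" using apos nN mN by simp
      show "a (real (Suc t) - 1) < a (real t - 1)" using m0 by (simp add: a_def algebra_simps)
    qed
    also have "\<dots> = m * (\<Sum>t<n. 1 / a (real t))"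
      by (simp add: sum_distrib_left a_def algebra_simps)
    finally show ?thesis .
  qed
  have SB: "m * (\<Sum>i<n-j. 1 / a (N + real i)) \<le> ln (a N) - ln (a (2*N - m))"
  proof -
    have "m * (\<Sum>i<n-j. 1 / a (N + real i)) = (\<Sum>i<n-j. (a (N + real i) - a (N + real (Suc i))) / a (N + real i))"
      by (simp add: sum_distrib_left a_def algebra_simps)
    also have "\<dots> \<le> (\<Sum>i<n-j. ln (a (N + real i)) - ln (a (N + real (Suc i))))"
    proof (intro sum_mono ln_step(1))
      fix i assume "i \<in> {..<n-j}"
      then have "i + 1 \<le> n - j" by simp
      then have "real i + 1 \<le> real (n-j)" by (metis of_nat_1 of_nat_add of_nat_le_iff)
      then show "0 < a (N + real (Suc i))" using apos njN by simp
      show "a (N + real (Suc i)) < a (N + real i)" using m0 by (simp add: a_def algebra_simps)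
    qed
    also have "\<dots> = ln (a N) - ln (a (2*N - m))"
      by (subst sum_lessThan_telescope') (simp add: njN algebra_simps)
    finally show ?thesis .
  qed
  have key: "ln (a N) - ln (a (2*N - m)) \<le> ln (a (-1)) - ln (a N)"
  proof -
    have e0: "a (-1) = N * N + m" and eN: "a N = N * (N - m)" and e2: "a (2*N - m) = (N - m) * (N - m)"
      by (simp_all add: a_def power2_eq_square algebra_simps)
    have p: "N > 0" "N - m > 0" using N1 mN by auto
    have h: "0 \<le> m * ((N - m) * (N - m))" using m0 by simp
    have "(N * (N - m)) * (N * (N - m)) \<le> (N * N + m) * ((N - m) * (N - m))"
      using h by (simp add: algebra_simps)
    then have "ln ((N * (N - m)) * (N * (N - m))) \<le> ln ((N * N + m) * ((N - m) * (N - m)))"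
      using p m0 by (subst ln_le_cancel_iff) (auto intro!: mult_pos_pos add_pos_pos)
    moreover have "ln ((N * (N - m)) * (N * (N - m))) = ln (N * (N - m)) + ln (N * (N - m))"
      using p by (intro ln_mult_pos) auto
    moreover have "ln ((N * N + m) * ((N - m) * (N - m))) = ln (N * N + m) + ln ((N - m) * (N - m))"
      using p m0 by (intro ln_mult_pos) (auto intro!: add_pos_pos)
    ultimately show ?thesis unfolding e0 eN e2 by linarith
  qed
  have "m * (\<Sum>i<n-j. 1 / a (N + real i)) \<le> m * (\<Sum>t<n. 1 / a (real t))"
    using SA SB key by linarith
  then have "(\<Sum>i<n-j. 1 / a (N + real i)) \<le> (\<Sum>t<n. 1 / a (real t))"
    using m0 by simp
  then have "N^2 * (\<Sum>i<n-j. 1 / a (N + real i)) \<le> N^2 * (\<Sum>t<n. 1 / a (real t))"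
    by (intro mult_left_mono) auto
  then show ?thesis unfolding phi_ff[OF n] A B by simp
qed

lemma sum_pairs:
  fixes m :: nat and g :: "nat \<Rightarrow> real"
  shows "(\<Sum>i<m. g (2*i) + g (2*i+1)) = (\<Sum>t<2*m. g t)"
  by (induction m) (simp_all add: algebra_simps)

lemma phi_half:
  assumes n: "n \<ge> 2" and jn2: "n \<le> 2*j" and jn: "j < n"
  shows "phi n j (1/2) \<ge> 0"
proof -
  define N where "N = real n - 1"
  have N1: "N \<ge> 1" using n by (simp add: N_def)
  have ffh: "ff n (1/2) t = 2*N / (2*N - real t)" if "real t < 2*N" for t
    using that N1 unfolding ff_def N_def[symmetric] by (simp add: field_simps)
  have se: "{0..n-j-1} = {..<n-j}" using jn by auto
  have B: "(\<Sum>i\<in>{0..n-j-1}. ff n (1/2) (n-1+i)) \<le> (\<Sum>i<n-j. ff n (1/2) (2*i) + ff n (1/2) (2*i+1))"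
    unfolding se
  proof (rule sum_mono)
    fix i assume "i \<in> {..<n-j}"
    then have "2*i+1 \<le> n - 1" using jn2 by auto
    then have i1: "2 * real i + 1 \<le> N" unfolding N_def using n
      by (metis (mono_tags, opaque_lifting) of_nat_1 of_nat_add of_nat_diff of_nat_le_iff of_nat_mult of_nat_numeral le_trans one_le_numeral)
    have e1: "ff n (1/2) (n-1+i) = 2*N / (N - real i)"
      using ffh[of "n-1+i"] i1 n by (simp add: N_def of_nat_diff algebra_simps)
    have e2: "ff n (1/2) (2*i) = N / (N - real i)"
      using ffh[of "2*i"] i1 N1 by (simp add: field_simps)
    have e3: "ff n (1/2) (2*i+1) = 2*N / (2*N - 2*real i - 1)"
      using ffh[of "2*i+1"] i1 by (simp add: algebra_simps)
    have "N / (N - real i) \<le> 2*N / (2*N - 2*real i - 1)"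
      using i1 N1 by (simp add: divide_simps)
    moreover have "2*N / (N - real i) = N / (N - real i) + N / (N - real i)"
      by (simp add: add_divide_distrib[symmetric])
    ultimately show "ff n (1/2) (n-1+i) \<le> ff n (1/2) (2*i) + ff n (1/2) (2*i+1)"
      unfolding e1 e2 e3 by linarith
  qed
  also have "\<dots> = (\<Sum>t<2*(n-j). ff n (1/2) t)" by (rule sum_pairs)
  also have "\<dots> \<le> (\<Sum>t\<in>{0..n-1}. ff n (1/2) t)"
  proof (rule sum_mono2)
    show "{..<2*(n-j)} \<subseteq> {0..n-1}" using jn2 by auto
    fix t assume "t \<in> {0..n-1} - {..<2*(n-j)}"
    then have "real t \<le> N" using n by (auto simp: N_def)
    then show "0 \<le> ff n (1/2) t" using ffh[of t] N1 by simp
  qed auto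
  finally show ?thesis unfolding phi_ff[OF n] by simp
qed

lemma g_mono:
  fixes x y c :: real
  assumes "0 \<le> x" "x < y" "0 \<le> c" "c * y < 1"
  shows "c \<le> 1 \<Longrightarrow> (1-y)/(1-c*y) \<le> (1-x)/(1-c*x)"
    and "1 \<le> c \<Longrightarrow> (1-x)/(1-c*x) \<le> (1-y)/(1-c*y)"
proof -
  have cx: "c * x \<le> c * y" using assms by (intro mult_left_mono) auto
  have d1: "1 - c*x > 0" "1 - c*y > 0" using assms cx by auto
  have e: "(1-x)*(1-c*y) - (1-y)*(1-c*x) = (y-x)*(1-c)" by (simp add: algebra_simps)
  show "c \<le> 1 \<Longrightarrow> (1-y)/(1-c*y) \<le> (1-x)/(1-c*x)"
  proof -
    assume "c \<le> 1"
    then have "(y-x)*(1-c) \<ge> 0" using assms by simp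
    then have "(1-y)*(1-c*x) \<le> (1-x)*(1-c*y)" using e by linarith
    then show ?thesis using d1 by (simp add: divide_simps mult.commute)
  qed
  show "1 \<le> c \<Longrightarrow> (1-x)/(1-c*x) \<le> (1-y)/(1-c*y)"
  proof -
    assume "1 \<le> c"
    then have "(y-x)*(1-c) \<le> 0" using assms by (simp add: mult_nonneg_nonpos)
    then have "(1-x)*(1-c*y) \<le> (1-y)*(1-c*x)" using e by linarith
    then show ?thesis using d1 by (simp add: divide_simps mult.commute)
  qed
qed

lemma psi_form:
  assumes n: "n \<ge> 2"
  shows "(1 - z) * phi n j z = (\<Sum>t\<in>{0..n-1}. (1-z)/(1 - real t / (real n - 1) * z))
     - (\<Sum>i\<in>{0..n-j-1}. (1-z)/(1 - real (n-1+i) / (real n - 1) * z))"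
  unfolding phi_ff[OF n] ff_def by (simp add: right_diff_distrib sum_distrib_left)

lemma psi_dec:
  assumes n: "n \<ge> 2" and jn: "j < n" and x0: "0 \<le> x" and xy: "x < y" and yb: "y < phi_bound n j"
  shows "(1 - y) * phi n j y < (1 - x) * phi n j x"
proof -
  define N where "N = real n - 1"
  have N1: "N \<ge> 1" using n by (simp add: N_def)
  have jN: "real j \<le> N" using jn by (simp add: N_def)
  have bd: "phi_bound n j = N / (2*N - real j)" unfolding phi_bound_def N_def by (simp add: algebra_simps)
  have pos: "2*N - real j > 0" using N1 jN by linarith
  have y1: "y < 1"
  proof -
    have "N / (2*N - real j) \<le> 1" using pos jN by (simp add: divide_simps)
    then show ?thesis using yb bd by linarith
  qed
  have A: "(\<Sum>t\<in>{0..n-1}. (1-y)/(1 - real t / (real n - 1) * y)) < (\<Sum>t\<in>{0..n-1}. (1-x)/(1 - real t / (real n - 1) * x))"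
  proof (rule sum_strict_mono_ex1)
    show "\<forall>t\<in>{0..n-1}. (1-y)/(1 - real t / (real n - 1) * y) \<le> (1-x)/(1 - real t / (real n - 1) * x)"
    proof
      fix t assume "t \<in> {0..n-1}"
      then have tN: "real t \<le> N" using n by (auto simp: N_def)
      have c1: "real t / N \<le> 1" using tN N1 by simp
      have "real t / N * y \<le> 1 * y" using c1 xy x0 by (intro mult_right_mono) auto
      then have "real t / N * y < 1" using y1 by linarith
      then show "(1-y)/(1 - real t / (real n - 1) * y) \<le> (1-x)/(1 - real t / (real n - 1) * x)"
        using g_mono(1)[OF x0 xy _ _ c1] N1 unfolding N_def by simp
    qed
    show "\<exists>t\<in>{0..n-1}. (1-y)/(1 - real t / (real n - 1) * y) < (1-x)/(1 - real t / (real n - 1) * x)"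
      using xy by (intro bexI[of _ 0]) auto
  qed simp
  have B: "(\<Sum>i\<in>{0..n-j-1}. (1-x)/(1 - real (n-1+i) / (real n - 1) * x)) \<le> (\<Sum>i\<in>{0..n-j-1}. (1-y)/(1 - real (n-1+i) / (real n - 1) * y))"
  proof (rule sum_mono)
    fix i assume "i \<in> {0..n-j-1}"
    then have "i + 1 \<le> n - j" using jn by auto
    then have "real i + 1 \<le> real (n - j)" by (metis of_nat_1 of_nat_add of_nat_le_iff)
    then have iN: "real i \<le> N - real j" using jn by (simp add: N_def of_nat_diff)
    have ce: "real (n-1+i) / (real n - 1) = (N + real i) / N" using n by (simp add: N_def of_nat_diff)
    have c1: "1 \<le> (N + real i) / N" using N1 by simp
    have "(N + real i) / N * y < (N + real i) / N * (N / (2*N - real j))"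
      using yb bd N1 by (intro mult_strict_left_mono) (auto intro!: divide_pos_pos add_pos_nonneg)
    also have "\<dots> = (N + real i) / (2*N - real j)" using N1 by simp
    also have "\<dots> \<le> 1" using pos iN by (simp add: divide_simps)
    finally have "(N + real i) / N * y < 1" .
    then show "(1-x)/(1 - real (n-1+i) / (real n - 1) * x) \<le> (1-y)/(1 - real (n-1+i) / (real n - 1) * y)"
      unfolding ce using g_mono(2)[OF x0 xy _ _ c1] N1 by simp
  qed
  show ?thesis unfolding psi_form[OF n] using A B by linarith
qed

lemma den_pos:
  assumes n: "n \<ge> 2" and jn: "j < n" and z0: "0 \<le> z" and zb: "z < phi_bound n j"
  shows "t \<le> n - 1 \<Longrightarrow> 1 - real t / (real n - 1) * z > 0"
    and "i \<le> n - j - 1 \<Longrightarrow> 1 - z - real i / (real n - 1) * z > 0"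
proof -
  define N where "N = real n - 1"
  have N1: "N \<ge> 1" using n by (simp add: N_def)
  have jN: "real j \<le> N" using jn by (simp add: N_def)
  have bd: "phi_bound n j = N / (2*N - real j)" unfolding phi_bound_def N_def by (simp add: algebra_simps)
  have pos: "2*N - real j > 0" using N1 jN by linarith
  have key: "c / N * z < 1" if "0 \<le> c" "c \<le> 2*N - real j" for c
  proof -
    have "c / N * z \<le> c / N * (N / (2*N - real j))"
      using zb bd N1 that by (intro mult_left_mono) auto
    also have "\<dots> = c / (2*N - real j)" using N1 by simp
    finally have h: "c / N * z \<le> c / (2*N - real j)" .
    show ?thesis
    proof (cases "c = 2*N - real j")
      case True
      then have "c / N * z < c / N * (N / (2*N - real j))"
        using zb bd N1 pos by (intro mult_strict_left_mono) auto
      then show ?thesis using True N1 pos by simp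
    next
      case False
      then have "c / (2*N - real j) < 1" using that pos by (simp add: divide_simps)
      then show ?thesis using h by linarith
    qed
  qed
  show "t \<le> n - 1 \<Longrightarrow> 1 - real t / (real n - 1) * z > 0"
  proof -
    assume "t \<le> n - 1"
    then have "real t \<le> N" using n by (simp add: N_def of_nat_diff)
    then show ?thesis using key[of "real t"] jN unfolding N_def by simp
  qed
  show "i \<le> n - j - 1 \<Longrightarrow> 1 - z - real i / (real n - 1) * z > 0"
  proof -
    assume "i \<le> n - j - 1"
    then have "i + 1 \<le> n - j" using jn by auto
    then have "real i + 1 \<le> real (n - j)" by (metis of_nat_1 of_nat_add of_nat_le_iff)
    then have iN: "real i \<le> N - real j" using jn by (simp add: N_def of_nat_diff)
    have "(N + real i) / N * z < 1" using key[of "N + real i"] iN N1 by simp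
    moreover have "(N + real i) / N * z = z + real i / (real n - 1) * z"
      using N1 unfolding N_def by (simp add: field_simps)
    ultimately show ?thesis by simp
  qed
qed

lemma phi_cont:
  assumes n: "n \<ge> 2" and jn: "j < n" and S: "S \<subseteq> {0..<phi_bound n j}"
  shows "continuous_on S (phi n j)"
proof -
  have "continuous_on S (\<lambda>x. (\<Sum>i=0..n-1. 1 / (1 - real i / (real n - 1) * x))
             - (\<Sum>i=0..n-j-1. 1 / (1 - x - real i / (real n - 1) * x)))"
  proof (intro continuous_intros ballI)
    fix x i assume "i \<in> {0..n-1}" "x \<in> S"
    then have "0 \<le> x" "x < phi_bound n j" "i \<le> n - 1" using S by auto
    from den_pos(1)[OF n jn this] show "1 - real i / (real n - 1) * x \<noteq> 0" by linarith
  next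
    fix x i assume "i \<in> {0..n-j-1}" "x \<in> S"
    then have "0 \<le> x" "x < phi_bound n j" "i \<le> n - j - 1" using S by auto
    from den_pos(2)[OF n jn this] show "1 - x - real i / (real n - 1) * x \<noteq> 0" by linarith
  qed
  then show ?thesis unfolding phi_def[abs_def] by simp
qed

lemma xnj_char:
  assumes n: "n \<ge> 2" and j: "2*j + 1 \<le> n"
  shows "0 \<le> x_nj n j \<and> x_nj n j \<le> real j / (real n - 1) \<and>
     (\<forall>y. 0 \<le> y \<and> y < x_nj n j \<longrightarrow> phi n j y > 0) \<and>
     (\<forall>y. x_nj n j < y \<and> y < phi_bound n j \<longrightarrow> phi n j y < 0)"
proof -
  define N where "N = real n - 1"
  have N1: "N \<ge> 1" using n by (simp add: N_def)
  have jn: "j < n" using j by simp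
  have jN2: "2 * real j \<le> N" using j unfolding N_def
    by (metis (mono_tags, opaque_lifting) add_diff_cancel_right' le_diff_eq of_nat_1 of_nat_add of_nat_le_iff of_nat_mult of_nat_numeral)
  have bd: "phi_bound n j = N / (2*N - real j)" unfolding phi_bound_def N_def by (simp add: algebra_simps)
  have pos: "2*N - real j > 0" using N1 jN2 by linarith
  have b1: "phi_bound n j \<le> 1" unfolding bd using pos jN2 by (simp add: divide_simps)
  have hb: "real j / N < phi_bound n j"
  proof -
    have "real j * (2*N - real j) < N * N"
    proof -
      have "(N - real j) * (N - real j) > 0" using jN2 N1 by (intro mult_pos_pos) auto
      then show ?thesis by (simp add: algebra_simps)
    qed
    then show ?thesis unfolding bd using pos N1 by (simp add: divide_simps)
  qed
  have hhalf: "real j / N \<le> 1/2" using jN2 N1 by (simp add: divide_simps)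
  define psi where "psi z = (1 - z) * phi n j z" for z
  obtain x0 where x0: "0 \<le> x0" "(real j - 1) / N \<le> x0" "x0 \<le> real j / N" "psi x0 = 0"
  proof (cases "j = 0")
    case True
    have "phi n 0 0 = 0" unfolding phi_def by simp
    then show ?thesis using that[of 0] True N1 by (simp add: psi_def)
  next
    case False
    define lo where "lo = (real j - 1) / N"
    have lo0: "0 \<le> lo" using False N1 by (simp add: lo_def)
    have lohi: "lo \<le> real j / N" using N1 by (simp add: lo_def divide_simps)
    have cont: "continuous_on {lo..real j / N} psi"
      unfolding psi_def
      by (intro continuous_intros phi_cont[OF n jn]) (use lo0 hb in auto)
    have fhi: "psi (real j / N) \<le> 0"
    proof -
      have "phi n j (real j / N) \<le> 0" unfolding N_def
        using phi_at_j[OF n] False j by simp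
      moreover have "1 - real j / N \<ge> 0" using hhalf by linarith
      ultimately show ?thesis unfolding psi_def by (simp add: mult_nonneg_nonpos)
    qed
    have flo: "psi lo \<ge> 0"
    proof -
      have "phi n j lo \<ge> 0"
      proof (cases "j = 1")
        case True
        then have "lo = 0" by (simp add: lo_def)
        moreover have "phi n 1 0 = 1" unfolding phi_def using n by simp
        ultimately show ?thesis using True by simp
      next
        case False
        then show ?thesis using phi_at_jm1[OF n] \<open>j \<noteq> 0\<close> j unfolding lo_def N_def by simp
      qed
      moreover have "1 - lo \<ge> 0" using lohi hhalf by linarith
      ultimately show ?thesis unfolding psi_def by simp
    qed
    obtain x where "x \<ge> lo" "x \<le> real j / N" "psi x = 0"
      using IVT2'[of psi "real j / N" 0 lo, OF fhi flo lohi cont] by blast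
    then show ?thesis using that[of x] lo0 unfolding lo_def by simp
  qed
  have x0b: "x0 < phi_bound n j" using x0 hb by linarith
  have pos_before: "phi n j y > 0" if "0 \<le> y" "y < x0" for y
  proof -
    have "psi x0 < psi y" unfolding psi_def using psi_dec[OF n jn that x0b] .
    then have "(1 - y) * phi n j y > 0" using x0(4) unfolding psi_def by linarith
    moreover have "1 - y > 0" using that x0 hhalf by linarith
    ultimately show ?thesis by (simp add: zero_less_mult_iff)
  qed
  have neg_after: "phi n j y < 0" if "x0 < y" "y < phi_bound n j" for y
  proof -
    have "psi y < psi x0" unfolding psi_def using psi_dec[OF n jn x0(1) that] .
    then have "(1 - y) * phi n j y < 0" using x0(4) unfolding psi_def by linarith
    moreover have "1 - y > 0" using that b1 by linarith
    ultimately show ?thesis by (simp add: mult_less_0_iff)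
  qed
  have phix0: "phi n j x0 = 0"
  proof -
    have "1 - x0 > 0" using x0 hhalf by linarith
    then show ?thesis using x0(4) by (simp add: psi_def)
  qed
  have "x_nj n j = x0"
    unfolding x_nj_def N_def[symmetric]
  proof (rule the_equality)
    show "(real j - 1) / N \<le> x0 \<and> x0 \<le> real j / N \<and>
      (\<forall>y. 0 \<le> y \<and> y < x0 \<longrightarrow> 0 < phi n j y) \<and> (\<forall>y. x0 < y \<and> y < phi_bound n j \<longrightarrow> phi n j y < 0)"
      using x0 pos_before neg_after by auto
  next
    fix x assume P: "(real j - 1) / N \<le> x \<and> x \<le> real j / N \<and>
      (\<forall>y. 0 \<le> y \<and> y < x \<longrightarrow> 0 < phi n j y) \<and> (\<forall>y. x < y \<and> y < phi_bound n j \<longrightarrow> phi n j y < 0)"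
    show "x = x0"
    proof (rule ccontr)
      assume ne: "x \<noteq> x0"
      show False
      proof (cases "x < x0")
        case True
        then have "phi n j x0 < 0" using P x0b by auto
        then show False using phix0 by simp
      next
        case False
        then have xg: "x0 < x" using ne by simp
        define y where "y = (x0 + x) / 2"
        have "0 < phi n j y" using P xg x0 by (auto simp: y_def)
        moreover have "phi n j y < 0" using neg_after[of y] xg P hb by (auto simp: y_def)
        ultimately show False by simp
      qed
    qed
  qed
  then show ?thesis using x0 pos_before neg_after hhalf unfolding N_def by auto
qed



definition Cc :: "nat \<Rightarrow> nat \<Rightarrow> real" where
  "Cc n k = real (n choose k) * (\<Prod>i<k. 1 - real i / (real n - 1))"
definition Pf :: "nat \<Rightarrow> nat \<Rightarrow> real \<Rightarrow> real" where
  "Pf n k y = (\<Prod>i<n-k. 1 - y - real i / (real n - 1) * y)"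
definition Qf :: "nat \<Rightarrow> real \<Rightarrow> real" where
  "Qf n y = (\<Prod>i<n. 1 - real i / (real n - 1) * y)"
definition Fh :: "nat \<Rightarrow> nat \<Rightarrow> real \<Rightarrow> real" where
  "Fh n k y = Cc n k * y ^ k * Pf n k y / Qf n y"

lemma p_eq_Fh:
  assumes n: "n \<ge> 2" and y: "0 \<le> y" "y \<le> 1/2"
  shows "polya_p n k y = Fh n k y"
proof -
  have c: "polya_c n y = - y / (real n - 1)" using y unfolding polya_c_def by simp
  have r1: "rising_fact y k (polya_c n y) = y ^ k * (\<Prod>i<k. 1 - real i / (real n - 1))"
  proof -
    have "rising_fact y k (polya_c n y) = (\<Prod>i<k. y * (1 - real i / (real n - 1)))"
      unfolding rising_fact_def c by (intro prod.cong refl) (simp add: algebra_simps)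
    also have "\<dots> = y ^ k * (\<Prod>i<k. 1 - real i / (real n - 1))"
      by (simp add: prod.distrib)
    finally show ?thesis .
  qed
  have r2: "rising_fact (1 - y) (n - k) (polya_c n y) = Pf n k y"
    unfolding rising_fact_def c Pf_def by (intro prod.cong refl) (simp add: algebra_simps)
  have r3: "rising_fact 1 n (polya_c n y) = Qf n y"
    unfolding rising_fact_def c Qf_def by (intro prod.cong refl) (simp add: algebra_simps)
  show ?thesis unfolding polya_p_def r1 r2 r3 Fh_def Cc_def by (simp add: algebra_simps)
qed

lemma Q_pos:
  assumes n: "n \<ge> 2" and y: "0 \<le> y" "y < 1"
  shows "Qf n y > 0"
  unfolding Qf_def
proof (rule prod_pos)
  fix i assume "i \<in> {..<n}"
  then have "real i \<le> real n - 1" by (simp add: of_nat_diff[symmetric])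
  then have "real i / (real n - 1) \<le> 1" using n by simp
  then have "real i / (real n - 1) * y \<le> 1 * y" using y by (intro mult_right_mono) auto
  then show "0 < 1 - real i / (real n - 1) * y" using y by simp
qed

lemma P_pos:
  assumes n: "n \<ge> 2" and y: "0 \<le> y" "y < 1/2"
  shows "Pf n k y > 0"
  unfolding Pf_def
proof (rule prod_pos)
  fix i assume "i \<in> {..<n-k}"
  then have "real i \<le> real n - 1" by (simp add: of_nat_diff[symmetric])
  then have "real i / (real n - 1) \<le> 1" using n by simp
  then have "real i / (real n - 1) * y \<le> 1 * y" using y by (intro mult_right_mono) auto
  then show "0 < 1 - y - real i / (real n - 1) * y" using y by simp
qed

lemma C_pos:
  assumes n: "n \<ge> 2" and k: "k < n"
  shows "Cc n k > 0"
  unfolding Cc_def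
proof (intro mult_pos_pos prod_pos)
  show "0 < real (n choose k)" using k by simp
  fix i assume "i \<in> {..<k}"
  then have "real i + 1 < real n" using k by simp
  then have "real i / (real n - 1) < 1" using n by simp
  then show "0 < 1 - real i / (real n - 1)" by simp
qed

lemma C_zero:
  assumes n: "n \<ge> 2"
  shows "Cc n n = 0"
proof -
  have "(\<Prod>i<n. 1 - real i / (real n - 1)) = 0"
    using n by (subst prod_zero_iff) (auto intro!: bexI[of _ "n-1"] simp: of_nat_diff)
  then show ?thesis unfolding Cc_def by simp
qed

lemma p_cont:
  assumes n: "n \<ge> 2"
  shows "continuous_on {0..1/2} (polya_p n k)"
proof -
  have "continuous_on {0..1/2} (Fh n k)"
    unfolding Fh_def Pf_def Qf_def
  proof (intro continuous_intros ballI)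
    fix x assume "x \<in> {0..(1::real)/2}"
    then have "Qf n x > 0" using Q_pos[OF n] by auto
    then show "(\<Prod>i<n. 1 - real i / (real n - 1) * x) \<noteq> 0" unfolding Qf_def by (metis order_less_irrefl)
  qed
  moreover have "\<And>y. y \<in> {0..1/2} \<Longrightarrow> Fh n k y = polya_p n k y" using p_eq_Fh[OF n] by auto
  ultimately show ?thesis using continuous_on_cong[of "{0..1/2}" "{0..1/2}" "Fh n k" "polya_p n k"] by blast
qed

lemma divsum:
  fixes k x a b AA BB :: real
  shows "k/x + (a - BB)/x - (b - AA)/x = (k + a - b + (AA - BB))/x"
  by (cases "x = 0") (simp_all add: field_simps)

lemma inv_helper1:
  fixes x c :: real
  assumes "1 - x - c * x > 0" "x > 0"
  shows "inverse (1 - x - c * x) * (- 1 - c) = (1 - 1 / (1 - x - c * x)) / x"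
proof -
  define d where "d = 1 - x - c * x"
  have d0: "d \<noteq> 0" using assms by (simp add: d_def)
  have "1 - 1 / d = (d - 1) / d" using d0 by (simp add: field_simps)
  also have "d - 1 = (- 1 - c) * x" by (simp add: d_def algebra_simps)
  finally have e: "1 - 1 / d = ((- 1 - c) * x) / d" .
  then have "(1 - 1 / d) / x = (- 1 - c) / d" using assms(2) by simp
  then show ?thesis unfolding d_def[symmetric] by (simp add: divide_inverse mult.commute)
qed

lemma inv_helper2:
  fixes x c :: real
  assumes "1 - c * x > 0" "x > 0"
  shows "inverse (1 - c * x) * (- c) = (1 - 1 / (1 - c * x)) / x"
proof -
  define d where "d = 1 - c * x"
  have d0: "d \<noteq> 0" using assms by (simp add: d_def)
  have "1 - 1 / d = (d - 1) / d" using d0 by (simp add: field_simps)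
  also have "d - 1 = (- c) * x" by (simp add: d_def algebra_simps)
  finally have e: "1 - 1 / d = ((- c) * x) / d" .
  then have "(1 - 1 / d) / x = (- c) / d" using assms(2) by simp
  then show ?thesis unfolding d_def[symmetric] by (simp add: divide_inverse mult.commute)
qed

lemma p_pos:
  assumes n: "n \<ge> 2" and k: "k < n" and x: "0 < x" "x < 1/2"
  shows "polya_p n k x > 0"
proof -
  have "polya_p n k x = Fh n k x" using p_eq_Fh[OF n, of x k] x by simp
  moreover have "Fh n k x > 0" unfolding Fh_def using x C_pos[OF n k] P_pos[OF n, of x k] Q_pos[OF n, of x]
    by (auto intro!: divide_pos_pos mult_pos_pos)
  ultimately show ?thesis by simp
qed

lemma p_deriv:
  assumes n: "n \<ge> 2" and k: "k < n" and x: "0 < x" "x < 1/2"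
  shows "DERIV (polya_p n k) x :> polya_p n k x * phi n k x / x"
proof -
  define Gl where "Gl y = ln (Cc n k) + real k * ln y + (\<Sum>i<n-k. ln (1 - y - real i / (real n - 1) * y))
      - (\<Sum>i<n. ln (1 - real i / (real n - 1) * y))" for y
  have denA: "1 - real i / (real n - 1) * y > 0" if "i < n" "0 \<le> y" "y < 1/2" for i y
  proof -
    have "real i \<le> real n - 1" using that by (simp add: of_nat_diff[symmetric])
    then have "real i / (real n - 1) \<le> 1" using n by simp
    then have "real i / (real n - 1) * y \<le> 1 * y" using that by (intro mult_right_mono) auto
    then show ?thesis using that by simp
  qed
  have denB: "1 - y - real i / (real n - 1) * y > 0" if "i < n" "0 \<le> y" "y < 1/2" for i y
  proof -
    have "real i \<le> real n - 1" using that by (simp add: of_nat_diff[symmetric])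
    then have "real i / (real n - 1) \<le> 1" using n by simp
    then have "real i / (real n - 1) * y \<le> 1 * y" using that by (intro mult_right_mono) auto
    then show ?thesis using that by simp
  qed
  have FG: "polya_p n k y = exp (Gl y)" if y: "y \<in> {0<..<1/2}" for y
  proof -
    have y0: "0 < y" "y < 1/2" using y by auto
    have e1: "exp (ln (Cc n k)) = Cc n k" using C_pos[OF n k] by simp
    have e2: "exp (real k * ln y) = y ^ k" using y0 by (simp add: exp_of_nat_mult)
    have e3: "exp (\<Sum>i<n-k. ln (1 - y - real i / (real n - 1) * y)) = Pf n k y"
      unfolding exp_sum[OF finite_lessThan] Pf_def
      by (intro prod.cong refl exp_ln denB) (use y0 in auto)
    have e4: "exp (\<Sum>i<n. ln (1 - real i / (real n - 1) * y)) = Qf n y"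
      unfolding exp_sum[OF finite_lessThan] Qf_def
      by (intro prod.cong refl exp_ln denA) (use y0 in auto)
    show ?thesis unfolding Gl_def exp_diff exp_add e1 e2 e3 e4 p_eq_Fh[OF n y0(1)[THEN less_imp_le] y0(2)[THEN less_imp_le]] Fh_def
      by simp
  qed
  define dA where "dA i = 1 - real i / (real n - 1) * x" for i
  define dB where "dB i = 1 - x - real i / (real n - 1) * x" for i
  have dA0: "dA i > 0" if "i < n" for i unfolding dA_def using denA[OF that] x by simp
  have dB0: "dB i > 0" if "i < n" for i unfolding dB_def using denB[OF that] x by simp
  have DG: "DERIV Gl x :> real k / x + (\<Sum>i<n-k. (1 - 1 / dB i) / x) - (\<Sum>i<n. (1 - 1 / dA i) / x)"
  proof -
  have h3: "DERIV (\<lambda>y. \<Sum>i<n-k. ln (1 - y - real i / (real n - 1) * y)) x :> (\<Sum>i<n-k. (1 - 1 / dB i) / x)"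
  proof (rule DERIV_sum)
    fix i assume i: "i \<in> {..<n-k}"
    then have "dB i > 0" using dB0 by auto
    have "((\<lambda>y. 1 - y - real i / (real n - 1) * y) has_real_derivative (- 1 - real i / (real n - 1))) (at x)"
      using n by (auto intro!: derivative_eq_intros)
    then have "((\<lambda>y. ln (1 - y - real i / (real n - 1) * y)) has_real_derivative
        inverse (dB i) * (- 1 - real i / (real n - 1))) (at x)"
      using \<open>dB i > 0\<close> unfolding dB_def by (intro DERIV_chain2[OF DERIV_ln])
    moreover have "inverse (dB i) * (- 1 - real i / (real n - 1)) = (1 - 1 / dB i) / x"
      using inv_helper1[of x "real i / (real n - 1)"] \<open>dB i > 0\<close> x unfolding dB_def by simp
    ultimately show "((\<lambda>y. ln (1 - y - real i / (real n - 1) * y)) has_real_derivative (1 - 1 / dB i) / x) (at x)"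
      by simp
  qed
  have h4: "DERIV (\<lambda>y. \<Sum>i<n. ln (1 - real i / (real n - 1) * y)) x :> (\<Sum>i<n. (1 - 1 / dA i) / x)"
  proof (rule DERIV_sum)
    fix i assume i: "i \<in> {..<n}"
    then have "dA i > 0" using dA0 by auto
    have "((\<lambda>y. 1 - real i / (real n - 1) * y) has_real_derivative (- (real i / (real n - 1)))) (at x)"
      using n by (auto intro!: derivative_eq_intros)
    then have "((\<lambda>y. ln (1 - real i / (real n - 1) * y)) has_real_derivative
        inverse (dA i) * (- (real i / (real n - 1)))) (at x)"
      using \<open>dA i > 0\<close> unfolding dA_def by (intro DERIV_chain2[OF DERIV_ln])
    moreover have "inverse (dA i) * (- (real i / (real n - 1))) = (1 - 1 / dA i) / x"
      using inv_helper2[of "real i / (real n - 1)" x] \<open>dA i > 0\<close> x unfolding dA_def by simp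
    ultimately show "((\<lambda>y. ln (1 - real i / (real n - 1) * y)) has_real_derivative (1 - 1 / dA i) / x) (at x)"
      by simp
  qed
  have h1: "DERIV (\<lambda>y. ln (Cc n k)) x :> 0" by simp
  have h2: "DERIV (\<lambda>y. real k * ln y) x :> real k * inverse x"
    using x by (intro DERIV_cmult DERIV_ln) auto
  have "DERIV Gl x :> 0 + real k * inverse x + (\<Sum>i<n-k. (1 - 1 / dB i) / x) - (\<Sum>i<n. (1 - 1 / dA i) / x)"
    unfolding Gl_def by (intro DERIV_diff DERIV_add h1 h2 h3 h4)
  then show ?thesis by (simp add: divide_inverse)
  qed
  have PH: "real k / x + (\<Sum>i<n-k. (1 - 1 / dB i) / x) - (\<Sum>i<n. (1 - 1 / dA i) / x) = phi n k x / x"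
  proof -
    have s1: "(\<Sum>i<n-k. (1 - 1 / dB i) / x) = (real (n-k) - (\<Sum>i<n-k. 1 / dB i)) / x"
      by (simp add: sum_divide_distrib[symmetric] sum_subtractf)
    have s2: "(\<Sum>i<n. (1 - 1 / dA i) / x) = (real n - (\<Sum>i<n. 1 / dA i)) / x"
      by (simp add: sum_divide_distrib[symmetric] sum_subtractf)
    have ph: "phi n k x = (\<Sum>i<n. 1 / dA i) - (\<Sum>i<n-k. 1 / dB i)"
    proof -
      have "{0..n-1} = {..<n}" "{0..n-k-1} = {..<n-k}" using n k by auto
      then show ?thesis unfolding phi_def dA_def dB_def by simp
    qed
    have z: "real k + real (n-k) - real n = 0" using k by (simp add: of_nat_diff)
    show ?thesis unfolding s1 s2 ph divsum z by simp
  qed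
  have "DERIV (\<lambda>y. exp (Gl y)) x :> exp (Gl x) * (phi n k x / x)"
    using DG unfolding PH by (auto intro!: derivative_eq_intros)
  then have "DERIV (polya_p n k) x :> exp (Gl x) * (phi n k x / x)"
    by (rule has_field_derivative_transform_within_open[of _ _ _ "{0<..<1/2}"])
       (use x FG in auto)
  moreover have "exp (Gl x) = polya_p n k x" using FG x by simp
  ultimately show ?thesis by simp
qed



lemma p_nn_zero:
  assumes n: "n \<ge> 2" and y: "0 \<le> y" "y \<le> 1/2"
  shows "polya_p n n y = 0"
  using p_eq_Fh[OF n y, of n] C_zero[OF n] by (simp add: Fh_def)

lemma mono_half:
  assumes n: "n \<ge> 2" and k: "k \<le> n" and a: "0 \<le> a" and b: "b \<le> 1/2"
    and ph: "\<And>x. a < x \<Longrightarrow> x < b \<Longrightarrow> phi n k x \<ge> 0"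
  shows "mono_on {a..b} (polya_p n k)"
proof (rule mono_onI)
  fix r s assume rs: "r \<in> {a..b}" "s \<in> {a..b}" "r \<le> s"
  show "polya_p n k r \<le> polya_p n k s"
  proof (cases "k = n")
    case True
    then show ?thesis using p_nn_zero[OF n] rs a b by simp
  next
    case False
    then have kn: "k < n" using k by simp
    show ?thesis
    proof (rule DERIV_nonneg_imp_increasing_open[OF rs(3)])
      fix z assume z: "r < z" "z < s"
      then have z0: "0 < z" "z < 1/2" using rs a b by auto
      have "phi n k z \<ge> 0" using ph z rs by auto
      then have "polya_p n k z * phi n k z / z \<ge> 0"
        using p_pos[OF n kn z0] z0 by simp
      then show "\<exists>y. DERIV (polya_p n k) z :> y \<and> 0 \<le> y"
        using p_deriv[OF n kn z0] by blast
    next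
      show "continuous_on {r..s} (polya_p n k)"
        by (rule continuous_on_subset[OF p_cont[OF n]]) (use rs a b in auto)
    qed
  qed
qed

lemma anti_half:
  assumes n: "n \<ge> 2" and k: "k \<le> n" and a: "0 \<le> a" and b: "b \<le> 1/2"
    and ph: "\<And>x. a < x \<Longrightarrow> x < b \<Longrightarrow> phi n k x \<le> 0"
  shows "antimono_on {a..b} (polya_p n k)"
  unfolding monotone_on_def
proof (intro ballI impI)
  fix r s assume rs: "r \<in> {a..b}" "s \<in> {a..b}" "r \<le> s"
  show "polya_p n k s \<le> polya_p n k r"
  proof (cases "k = n")
    case True
    then show ?thesis using p_nn_zero[OF n] rs a b by simp
  next
    case False
    then have kn: "k < n" using k by simp
    show ?thesis
    proof (rule DERIV_nonpos_imp_decreasing_open[OF rs(3)])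
      fix z assume z: "r < z" "z < s"
      then have z0: "0 < z" "z < 1/2" using rs a b by auto
      have "phi n k z \<le> 0" using ph z rs by auto
      then have "polya_p n k z * phi n k z / z \<le> 0"
        using p_pos[OF n kn z0] z0 by (simp add: divide_nonpos_pos mult_nonneg_nonpos)
      then show "\<exists>y. DERIV (polya_p n k) z :> y \<and> y \<le> 0"
        using p_deriv[OF n kn z0] by blast
    next
      show "continuous_on {r..s} (polya_p n k)"
        by (rule continuous_on_subset[OF p_cont[OF n]]) (use rs a b in auto)
    qed
  qed
qed

lemma p_sym:
  assumes "k \<le> n"
  shows "polya_p n k x = polya_p n (n - k) (1 - x)"
proof -
  have "polya_c n (1 - x) = polya_c n x" unfolding polya_c_def by (simp add: min.commute)
  moreover have "(n choose (n - k)) = (n choose k)" using assms by (simp add: binomial_symmetric[symmetric])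
  ultimately show ?thesis unfolding polya_p_def using assms by (simp add: mult.commute)
qed

lemma refl1:
  assumes k: "k \<le> n" and m: "antimono_on {c..d} (polya_p n (n - k))" and ab: "a = 1 - d" "b = 1 - c"
  shows "mono_on {a..b} (polya_p n k)"
proof (rule mono_onI)
  fix r s assume rs: "r \<in> {a..b}" "s \<in> {a..b}" "r \<le> s"
  have "polya_p n (n - k) (1 - r) \<le> polya_p n (n - k) (1 - s)"
    using m rs ab unfolding monotone_on_def by auto
  then show "polya_p n k r \<le> polya_p n k s" using p_sym[OF k] by simp
qed

lemma refl2:
  assumes k: "k \<le> n" and m: "mono_on {c..d} (polya_p n (n - k))" and ab: "a = 1 - d" "b = 1 - c"
  shows "antimono_on {a..b} (polya_p n k)"
  unfolding monotone_on_def
proof (intro ballI impI)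
  fix r s assume rs: "r \<in> {a..b}" "s \<in> {a..b}" "r \<le> s"
  have "polya_p n (n - k) (1 - s) \<le> polya_p n (n - k) (1 - r)"
    using m rs ab unfolding monotone_on_def by auto
  then show "polya_p n k s \<le> polya_p n k r" using p_sym[OF k] by simp
qed

lemma glue_mono:
  fixes f :: "real \<Rightarrow> real"
  assumes "mono_on {a..b} f" "mono_on {b..c} f" "a \<le> b" "b \<le> c"
  shows "mono_on {a..c} f"
proof (rule mono_onI)
  fix r s assume rs: "r \<in> {a..c}" "s \<in> {a..c}" "r \<le> s"
  show "f r \<le> f s"
  proof (cases "s \<le> b")
    case True
    then show ?thesis using assms(1) rs unfolding monotone_on_def by auto
  next
    case False
    show ?thesis
    proof (cases "r \<ge> b")
      case True
      then show ?thesis using assms(2) rs unfolding monotone_on_def by auto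
    next
      case False
      then have "f r \<le> f b" using assms(1,3) rs unfolding monotone_on_def by auto
      moreover have "f b \<le> f s" using assms(2,4) rs \<open>\<not> s \<le> b\<close> unfolding monotone_on_def by auto
      ultimately show ?thesis by simp
    qed
  qed
qed

lemma glue_anti:
  fixes f :: "real \<Rightarrow> real"
  assumes "antimono_on {a..b} f" "antimono_on {b..c} f" "a \<le> b" "b \<le> c"
  shows "antimono_on {a..c} f"
proof -
  have "mono_on {a..b} (\<lambda>x. - f x)" "mono_on {b..c} (\<lambda>x. - f x)"
    using assms(1,2) unfolding monotone_on_def by auto
  then have "mono_on {a..c} (\<lambda>x. - f x)" using glue_mono assms(3,4) by blast
  then show ?thesis unfolding monotone_on_def by auto
qed

lemma phi_pos_half:
  assumes n: "n \<ge> 2" and jn2: "n \<le> 2*j" and jn: "j < n" and x: "0 \<le> x" "x < 1/2"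
  shows "phi n j x > 0"
proof -
  have hb: "1/2 < phi_bound n j"
  proof -
    have "real j \<ge> 1" using jn2 n by simp
    then have "real n - 1 < 2 * (real n - 1) - real j + real j" using n by simp
    moreover have "2 * real n - real j - 2 > 0" using jn n by simp
    ultimately show ?thesis unfolding phi_bound_def using \<open>real j \<ge> 1\<close> by (simp add: divide_simps)
  qed
  have "(1 - 1/2) * phi n j (1/2) < (1 - x) * phi n j x"
    using psi_dec[OF n jn x(1) x(2) hb] .
  moreover have "(1 - 1/2) * phi n j (1/2) \<ge> 0" using phi_half[OF n jn2 jn] by simp
  ultimately have "(1 - x) * phi n j x > 0" by linarith
  moreover have "1 - x > 0" using x by simp
  ultimately show ?thesis by (simp add: zero_less_mult_iff)
qed

lemma incr_half:
  assumes n: "n \<ge> 2" and k2: "n \<le> 2*k" and k: "k \<le> n"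
  shows "mono_on {0..1/2} (polya_p n k)"
proof (cases "k = n")
  case True
  then show ?thesis using p_nn_zero[OF n] by (intro mono_onI) auto
next
  case False
  then have kn: "k < n" using k by simp
  show ?thesis using phi_pos_half[OF n k2 kn] by (intro mono_half[OF n k]) (auto intro: less_imp_le)
qed

lemma xnj_mono:
  assumes n: "n \<ge> 2" and k: "2*k + 1 \<le> n"
  shows "x_nj n k \<le> 1/2" "0 \<le> x_nj n k" "mono_on {0..x_nj n k} (polya_p n k)"
    "antimono_on {x_nj n k..1/2} (polya_p n k)"
proof -
  note c = xnj_char[OF n k]
  have kn: "k \<le> n" using k by simp
  have "real k / (real n - 1) \<le> 1/2"
  proof -
    have "2 * real k \<le> real n - 1" using k
      by (metis (mono_tags, opaque_lifting) add_diff_cancel_right' le_diff_eq of_nat_1 of_nat_add of_nat_le_iff of_nat_mult of_nat_numeral)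
    then show ?thesis using n by (simp add: divide_simps)
  qed
  then show x2: "x_nj n k \<le> 1/2" using c by linarith
  show x0: "0 \<le> x_nj n k" using c by simp
  show "mono_on {0..x_nj n k} (polya_p n k)"
    using c x2 by (intro mono_half[OF n kn]) (auto intro: less_imp_le)
  have hb: "1/2 \<le> phi_bound n k"
  proof -
    have "real (2*k+1) \<le> real n" using k by (rule of_nat_mono)
    then have "2 * real n - real k - 2 > 0" using n by simp
    then show ?thesis unfolding phi_bound_def by (simp add: divide_simps)
  qed
  show "antimono_on {x_nj n k..1/2} (polya_p n k)"
    using c hb x0 by (intro anti_half[OF n kn]) (auto intro: less_imp_le)
qed

theorem theorem3p1:
  fixes n k :: nat
  assumes "n \<ge> 2" and "k \<le> n"
  shows "mono_on {0..x_star n k} (polya_p n k) \<and> antimono_on {x_star n k..1} (polya_p n k)"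
proof -
  note n = assms(1) and k = assms(2)
  consider (A) "2*k + 1 \<le> n" | (B) "2*k = n" | (C) "n + 1 \<le> 2*k" by linarith
  then show ?thesis
  proof cases
    case A
    have xs: "x_star n k = x_nj n k"
    proof -
      have "real (2*k+1) \<le> real n" using A by (rule of_nat_mono)
      then have "real k \<le> (real n - 1) / 2" by simp
      then show ?thesis unfolding x_star_def by simp
    qed
    note X = xnj_mono[OF n A]
    have m2: "mono_on {0..1/2} (polya_p n (n - k))" using A by (intro incr_half[OF n]) auto
    have "antimono_on {1/2..1} (polya_p n k)" by (rule refl2[OF k m2]) auto
    then have "antimono_on {x_nj n k..1} (polya_p n k)"
      using glue_anti[OF X(4)] X(1) by auto
    then show ?thesis using X(3) unfolding xs by simp
  next
    case B
    have xs: "x_star n k = 1/2"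
    proof -
      have "real (2*k) = real n" using B by simp
      then have "\<not> real k \<le> (real n - 1) / 2" "real k < (real n + 1) / 2" by simp_all
      then show ?thesis unfolding x_star_def by simp
    qed
    have m1: "mono_on {0..1/2} (polya_p n k)" using B by (intro incr_half[OF n]) auto
    have m2: "mono_on {0..1/2} (polya_p n (n - k))" using B by (intro incr_half[OF n]) auto
    have "antimono_on {1/2..1} (polya_p n k)" by (rule refl2[OF k m2]) auto
    then show ?thesis using m1 unfolding xs by simp
  next
    case C
    define j where "j = n - k"
    have jA: "2*j + 1 \<le> n" using C k by (simp add: j_def)
    have nj: "n - j = k" using k by (simp add: j_def)
    have jle: "j \<le> n" by (simp add: j_def)
    have xs: "x_star n k = 1 - x_nj n j"
    proof -
      have "real (n+1) \<le> real (2*k)" using C by (rule of_nat_mono)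
      then have "\<not> real k \<le> (real n - 1) / 2" "\<not> real k < (real n + 1) / 2" by simp_all
      then show ?thesis unfolding x_star_def j_def by simp
    qed
    note X = xnj_mono[OF n jA]
    have m1: "mono_on {0..1/2} (polya_p n k)" using C k by (intro incr_half[OF n]) auto
    have m3: "mono_on {1/2..1 - x_nj n j} (polya_p n k)"
      by (rule refl1[OF k _ ]) (use X(4) j_def in auto)
    have mono: "mono_on {0..1 - x_nj n j} (polya_p n k)"
      using glue_mono[OF m1 m3] X(1) by auto
    have anti: "antimono_on {1 - x_nj n j..1} (polya_p n k)"
      by (rule refl2[OF k _ ]) (use X(3) j_def in auto)
    show ?thesis using mono anti unfolding xs by simp
  qed
qed

end
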